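(* Let $f(x,y)=x^2y+x^2+y^2-y\in\mathbb{Z}[x,y]$. Define $R^{(1)}(x,x_1)=f(x,x_1)$ and, for $n\ge2$, $R^{(n)}(x,x_n)=\mathrm{Res}_{x_{n-1}}\big(R^{(n-1)}(x,x_{n-1}),\,f(x_{n-1},x_n)\big)$, the resultant with respect to $x_{n-1}$; set $R_n(x)=R^{(n)}(x,x)$. Then $\deg R_n(x)=2^{n+1}-1$ for all $n\ge1$. *)

theory Defs
  imports "Subresultants.Resultant_Prelim"
begin

text \<open>Bivariate/trivariate integer polynomials are encoded as nested univariate
  polynomials. R^(n)(x, x_n) is an int poly poly: outer variable x_n,
  coefficients in Z[x].\<close>

text \<open>f(x, x_1) = x^2 x_1 + x^2 + x_1^2 - x_1 as a polynomial in x_1 over Z[x].\<close>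
definition R1 :: "int poly poly" where
  "R1 = [: [:0, 0, 1:], [:-1, 0, 1:], 1 :]"

text \<open>f(x_{n-1}, x_n) = x_{n-1}^2 x_n + x_{n-1}^2 + x_n^2 - x_n as a polynomial in
  x_{n-1} whose coefficients are polynomials in x_n over Z[x] (constant in x).\<close>
definition f_step :: "int poly poly poly" where
  "f_step = [: [:0, -1, 1:], 0, [:1, 1:] :]"

definition lift_coeffs :: "int poly poly \<Rightarrow> int poly poly poly" where
  "lift_coeffs p = map_poly (\<lambda>c. [:c:]) p"

fun Rpoly :: "nat \<Rightarrow> int poly poly" where
  "Rpoly 0 = R1"
| "Rpoly (Suc 0) = R1"
| "Rpoly (Suc (Suc n)) = resultant (lift_coeffs (Rpoly (Suc n))) f_step"

definition Rdiag :: "nat \<Rightarrow> int poly" where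
  "Rdiag n = poly (Rpoly n) [:0, 1:]"

end

theory Submission
  imports Defs "Subresultants.Subresultant"
begin

definition cf :: "int poly poly \<Rightarrow> nat \<Rightarrow> nat \<Rightarrow> int" where
  "cf Q i j = coeff (coeff Q j) i"

definition wb :: "nat \<Rightarrow> nat \<Rightarrow> nat \<Rightarrow> int poly poly \<Rightarrow> bool" where
  "wb \<alpha> \<beta> M Q \<longleftrightarrow> (\<forall>i j. cf Q i j \<noteq> 0 \<longrightarrow> \<alpha>*i + \<beta>*j \<le> M)"

definition wtop :: "nat \<Rightarrow> nat \<Rightarrow> nat \<Rightarrow> nat \<Rightarrow> nat \<Rightarrow> int \<Rightarrow> int poly poly \<Rightarrow> bool" where
  "wtop \<alpha> \<beta> M i0 j0 c Q \<longleftrightarrow> wb \<alpha> \<beta> M Q \<and> \<alpha>*i0 + \<beta>*j0 = M \<and> cf Q i0 j0 = c \<and>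
     (\<forall>i j. cf Q i j \<noteq> 0 \<and> \<alpha>*i + \<beta>*j = M \<longrightarrow> i = i0 \<and> j = j0)"

lemma cf_mult: "cf (Q*R) i j = (\<Sum>j1\<le>j. \<Sum>i1\<le>i. cf Q i1 j1 * cf R (i-i1) (j-j1))"
  by (simp add: cf_def coeff_mult coeff_sum)

lemma cf_add[simp]: "cf (Q+R) i j = cf Q i j + cf R i j" by (simp add: cf_def)
lemma cf_diff[simp]: "cf (Q-R) i j = cf Q i j - cf R i j" by (simp add: cf_def)
lemma cf_uminus[simp]: "cf (-Q) i j = - cf Q i j" by (simp add: cf_def)
lemma cf_0[simp]: "cf 0 i j = 0" by (simp add: cf_def)
lemma cf_sum: "cf (sum f A) i j = (\<Sum>x\<in>A. cf (f x) i j)"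
  by (induction A rule: infinite_finite_induct) (auto simp: cf_def)

lemma cf_mult_nz:
  assumes "cf (Q*R) i j \<noteq> 0"
  obtains i1 j1 where "i1 \<le> i" "j1 \<le> j" "cf Q i1 j1 \<noteq> 0" "cf R (i-i1) (j-j1) \<noteq> 0"
proof -
  from assms obtain j1 where "j1 \<le> j" and h: "(\<Sum>i1\<le>i. cf Q i1 j1 * cf R (i-i1) (j-j1)) \<noteq> 0"
    unfolding cf_mult by (metis (no_types, lifting) atMost_iff sum.neutral)
  then obtain i1 where "i1 \<le> i" "cf Q i1 j1 * cf R (i-i1) (j-j1) \<noteq> 0"
    by (metis (no_types, lifting) atMost_iff sum.neutral)
  then show ?thesis using that \<open>j1 \<le> j\<close> by auto
qed

lemma wbI: "(\<And>i j. cf Q i j \<noteq> 0 \<Longrightarrow> \<alpha>*i + \<beta>*j \<le> M) \<Longrightarrow> wb \<alpha> \<beta> M Q"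
  by (auto simp: wb_def)
lemma wbD: "wb \<alpha> \<beta> M Q \<Longrightarrow> cf Q i j \<noteq> 0 \<Longrightarrow> \<alpha>*i + \<beta>*j \<le> M"
  by (auto simp: wb_def)

lemma wb_mono: "wb \<alpha> \<beta> M Q \<Longrightarrow> M \<le> M' \<Longrightarrow> wb \<alpha> \<beta> M' Q"
  by (force simp: wb_def)
lemma wb_0[simp]: "wb \<alpha> \<beta> M 0" by (simp add: wb_def)
lemma wb_add: "wb \<alpha> \<beta> M Q \<Longrightarrow> wb \<alpha> \<beta> M R \<Longrightarrow> wb \<alpha> \<beta> M (Q+R)"
  unfolding wb_def by (metis add.right_neutral add_0 cf_add)
lemma wb_diff: "wb \<alpha> \<beta> M Q \<Longrightarrow> wb \<alpha> \<beta> M R \<Longrightarrow> wb \<alpha> \<beta> M (Q-R)"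
  unfolding wb_def by (metis diff_0_right diff_self cf_diff)
lemma wb_uminus: "wb \<alpha> \<beta> M Q \<Longrightarrow> wb \<alpha> \<beta> M (-Q)"
  by (auto simp: wb_def)
lemma wb_sum: "(\<And>x. x \<in> A \<Longrightarrow> wb \<alpha> \<beta> M (f x)) \<Longrightarrow> wb \<alpha> \<beta> M (sum f A)"
  by (induction A rule: infinite_finite_induct) (auto intro: wb_add)

lemma wb_mult: assumes "wb \<alpha> \<beta> M1 Q" "wb \<alpha> \<beta> M2 R" shows "wb \<alpha> \<beta> (M1+M2) (Q*R)"
proof (rule wbI)
  fix i j assume "cf (Q*R) i j \<noteq> 0"
  then obtain i1 j1 where h: "i1 \<le> i" "j1 \<le> j" "cf Q i1 j1 \<noteq> 0" "cf R (i-i1) (j-j1) \<noteq> 0"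
    by (rule cf_mult_nz)
  have "\<alpha>*i1 + \<beta>*j1 \<le> M1" using assms(1) h(3) by (rule wbD)
  moreover have "\<alpha>*(i-i1) + \<beta>*(j-j1) \<le> M2" using assms(2) h(4) by (rule wbD)
  moreover have "\<alpha>*i = \<alpha>*i1 + \<alpha>*(i-i1)" "\<beta>*j = \<beta>*j1 + \<beta>*(j-j1)"
    using h(1,2) by (simp_all add: add_mult_distrib2[symmetric])
  ultimately show "\<alpha>*i + \<beta>*j \<le> M1 + M2" by linarith
qed

lemma wb_power: "wb \<alpha> \<beta> M Q \<Longrightarrow> wb \<alpha> \<beta> (k*M) (Q^k)"
proof (induction k)
  case 0 show ?case by (auto simp: wb_def cf_def)
next
  case (Suc k) then show ?case using wb_mult[of \<alpha> \<beta> M Q "k*M" "Q^k"] by (simp add: add.commute)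
qed

lemma wtop_wb: "wtop \<alpha> \<beta> M i0 j0 c Q \<Longrightarrow> wb \<alpha> \<beta> M Q" by (simp add: wtop_def)

lemma sum_single:
  assumes "finite A" "x \<in> A" "\<And>y. y \<in> A \<Longrightarrow> y \<noteq> x \<Longrightarrow> f y = 0"
  shows "sum f A = f x"
proof -
  have "sum f A = f x + sum f (A - {x})" using assms(1,2) by (rule sum.remove)
  also have "sum f (A - {x}) = 0" using assms(3) by (intro sum.neutral) auto
  finally show ?thesis by simp
qed

lemma wtop_mult:
  assumes q: "wtop \<alpha> \<beta> M1 u1 u2 c1 Q" and r: "wtop \<alpha> \<beta> M2 v1 v2 c2 R"
  shows "wtop \<alpha> \<beta> (M1+M2) (u1+v1) (u2+v2) (c1*c2) (Q*R)"
proof -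
  have wq: "wb \<alpha> \<beta> M1 Q" and wr: "wb \<alpha> \<beta> M2 R" using q r by (simp_all add: wtop_def)
  have key: "i1 = u1 \<and> j1 = u2 \<and> i - i1 = v1 \<and> j - j1 = v2"
    if h: "i1 \<le> i" "j1 \<le> j" "cf Q i1 j1 \<noteq> 0" "cf R (i-i1) (j-j1) \<noteq> 0"
      and w: "\<alpha>*i + \<beta>*j = M1 + M2" for i j i1 j1
  proof -
    have "\<alpha>*i1 + \<beta>*j1 \<le> M1" using wq h(3) by (rule wbD)
    moreover have "\<alpha>*(i-i1) + \<beta>*(j-j1) \<le> M2" using wr h(4) by (rule wbD)
    moreover have "\<alpha>*i = \<alpha>*i1 + \<alpha>*(i-i1)" "\<beta>*j = \<beta>*j1 + \<beta>*(j-j1)"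
      using h(1,2) by (simp_all add: add_mult_distrib2[symmetric])
    ultimately have "\<alpha>*i1 + \<beta>*j1 = M1" "\<alpha>*(i-i1) + \<beta>*(j-j1) = M2" using w by linarith+
    then show ?thesis using q r h unfolding wtop_def by blast
  qed
  have val: "cf (Q*R) (u1+v1) (u2+v2) = c1*c2"
  proof -
    have "cf (Q*R) (u1+v1) (u2+v2) = (\<Sum>j1\<le>u2+v2. \<Sum>i1\<le>u1+v1. cf Q i1 j1 * cf R (u1+v1-i1) (u2+v2-j1))"
      by (rule cf_mult)
    also have "\<dots> = (\<Sum>i1\<le>u1+v1. cf Q i1 u2 * cf R (u1+v1-i1) (u2+v2-u2))"
    proof (rule sum_single)
      fix j1 assume "j1 \<in> {..u2+v2}" "j1 \<noteq> u2"
      then show "(\<Sum>i1\<le>u1+v1. cf Q i1 j1 * cf R (u1+v1-i1) (u2+v2-j1)) = 0"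
        using key[of _ "u1+v1" j1 "u2+v2"] q r unfolding wtop_def
        by (intro sum.neutral) (auto simp: algebra_simps)
    qed auto
    also have "\<dots> = cf Q u1 u2 * cf R (u1+v1-u1) (u2+v2-u2)"
    proof (rule sum_single)
      fix i1 assume "i1 \<in> {..u1+v1}" "i1 \<noteq> u1"
      then show "cf Q i1 u2 * cf R (u1+v1-i1) (u2+v2-u2) = 0"
        using key[of i1 "u1+v1" u2 "u2+v2"] q r unfolding wtop_def by (auto simp: algebra_simps)
    qed auto
    finally show ?thesis using q r by (simp add: wtop_def)
  qed
  have uniq: "i = u1+v1 \<and> j = u2+v2" if h: "cf (Q*R) i j \<noteq> 0" "\<alpha>*i + \<beta>*j = M1+M2" for i j
  proof -
    obtain i1 j1 where hh: "i1 \<le> i" "j1 \<le> j" "cf Q i1 j1 \<noteq> 0" "cf R (i-i1) (j-j1) \<noteq> 0"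
      using cf_mult_nz h(1) by blast
    from key[OF hh h(2)] show ?thesis using hh by auto
  qed
  have "wb \<alpha> \<beta> (M1+M2) (Q*R)" using wq wr by (rule wb_mult)
  moreover have "\<alpha>*(u1+v1) + \<beta>*(u2+v2) = M1+M2" using q r by (simp add: wtop_def algebra_simps)
  ultimately show ?thesis unfolding wtop_def using val uniq by blast
qed

lemma wtop_add:
  assumes "wtop \<alpha> \<beta> M u1 u2 c Q" "wb \<alpha> \<beta> M' R" "M' < M"
  shows "wtop \<alpha> \<beta> M u1 u2 c (Q+R)"
proof -
  have r0: "cf R i j = 0" if "\<alpha>*i + \<beta>*j = M" for i j
    using wbD[OF assms(2), of i j] that assms(3) by linarith
  have w: "wb \<alpha> \<beta> M (Q+R)" using wb_add[OF wtop_wb[OF assms(1)] wb_mono[OF assms(2), of M]] assms(3) by simp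
  have uniq: "i = u1 \<and> j = u2" if "cf (Q + R) i j \<noteq> 0" "\<alpha> * i + \<beta> * j = M" for i j
    using assms(1) r0[of i j] that unfolding wtop_def by (metis add.right_neutral cf_add)
  have "cf (Q+R) u1 u2 = c" using assms(1) r0[of u1 u2] by (simp add: wtop_def)
  then show ?thesis using w uniq assms(1) unfolding wtop_def by blast
qed

lemma wtop_add2:
  assumes "wtop \<alpha> \<beta> M u1 u2 c Q" "wb \<alpha> \<beta> M' R" "M' < M"
  shows "wtop \<alpha> \<beta> M u1 u2 c (R+Q)"
  using wtop_add[OF assms] by (simp add: add.commute)

lemma wtop_power: "wtop \<alpha> \<beta> M u1 u2 c Q \<Longrightarrow> wtop \<alpha> \<beta> (k*M) (k*u1) (k*u2) (c^k) (Q^k)"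
proof (induction k)
  case 0 show ?case by (auto simp: wtop_def wb_def cf_def)
next
  case (Suc k)
  from wtop_mult[OF Suc.prems Suc.IH[OF Suc.prems]] show ?case by (simp add: algebra_simps)
qed

lemma wtop_uminus: "wtop \<alpha> \<beta> M u1 u2 c Q \<Longrightarrow> wtop \<alpha> \<beta> M u1 u2 (-c) (-Q)"
  by (auto simp: wtop_def wb_def)

lemma dvd_power_diff: "(x - y) dvd (x^n - y^n :: 'a :: comm_ring_1)"
proof (induction n)
  case 0 show ?case by simp
next
  case (Suc n)
  have "x^Suc n - y^Suc n = x*(x^n - y^n) + (x - y)*y^n" by (simp add: algebra_simps)
  then show ?case using Suc by (metis dvd_add dvd_mult dvd_triv_left)
qed

lemma res_quad_lin:
  fixes a b e v :: "'a :: idom"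
  assumes a: "a \<noteq> 0" and v: "v \<noteq> 0"
  shows "resultant [:b,0,a:] [:e,v:] = a*e^2 + b*v^2"
proof -
  let ?G = "[:b,0,a:]" let ?L = "[:e,v:]" let ?r = "a*e^2 + b*v^2"
  let ?F = "smult (v^2) ?G"
  have eq: "?F + (-[:-(a*e), a*v:]) * ?L = [:?r:]"
    by (simp add: power2_eq_square)
  have dG: "degree ?G = 2" using a by simp
  have dF: "degree ?F = 2" using a v by simp
  have dL: "degree ?L = 1" using v by simp
  have "subresultant (degree [:?r:]) ?F ?L = smult ((-1)^((degree ?F - degree [:?r:]) * (degree ?L - degree [:?r:])) *
       lead_coeff ?L ^ (degree ?F - degree [:?r:]) * lead_coeff [:?r:] ^ (degree ?L - degree [:?r:] - 1)) [:?r:]"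
    by (rule BT_lemma_1_13[OF eq]) (use dF dL in auto)
  then have "subresultant 0 ?F ?L = smult (v^2) [:?r:]" using dF dL by simp
  then have "resultant ?F ?L = v^2 * ?r" unfolding subresultant_resultant by simp
  moreover have "resultant ?F ?L = v^2 * resultant ?G ?L"
    using resultant_smult_left[of "v^2" ?G ?L] v dL by simp
  ultimately show ?thesis using v by simp
qed

definition aa :: "int poly poly" where "aa = [:1,1:]"
definition bb :: "int poly poly" where "bb = [:0,-1,1:]"
definition Cp :: "int poly poly \<Rightarrow> nat \<Rightarrow> int poly poly" where "Cp P k = [:coeff P k:]"

definition Ehat :: "int poly poly \<Rightarrow> nat \<Rightarrow> int poly poly" where
  "Ehat P m = (\<Sum>j<m. Cp P (2*j) * (-bb)^j * aa^(m-j)) + Cp P (2*m) * (-bb)^m"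
definition Ohat :: "int poly poly \<Rightarrow> nat \<Rightarrow> int poly poly" where
  "Ohat P m = (\<Sum>j<m. Cp P (2*j+1) * (-bb)^j * aa^(m-1-j))"

lemma f_step_eq: "f_step = [:bb,0,aa:]" by (simp add: f_step_def aa_def bb_def)
lemma aa_nz: "aa \<noteq> 0" by (simp add: aa_def)

lemma G_monom: "[:bb,0,aa:] = monom aa 2 - [:-bb:]"
  by (simp add: monom_altdef power2_eq_square)

lemma const_power: "[:y:]^j = [:y^j:]" for y :: "'a::comm_ring_1"
  by (induction j) auto
lemma monom_mult_const: "monom x r * [:y:] = monom (x*y) r" for x y :: "'a::comm_ring_1"
  by (simp add: poly_eq_iff coeff_monom)

lemma cong_term:
  assumes "j \<le> m"
  shows "[:bb,0,aa:] dvd (monom (aa^m * c) (2*j + r) - monom (c * (-bb)^j * aa^(m-j)) r)"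
proof -
  have "monom (aa^m * c) (2*j + r) = monom (c * aa^(m-j)) r * (monom aa 2)^j"
    using assms by (simp add: monom_power mult_monom power_add[symmetric] algebra_simps)
  moreover have "monom (c * (-bb)^j * aa^(m-j)) r = monom (c * aa^(m-j)) r * [:-bb:]^j"
    by (simp add: const_power smult_monom mult_ac)
  ultimately have "monom (aa^m * c) (2*j + r) - monom (c * (-bb)^j * aa^(m-j)) r
     = monom (c * aa^(m-j)) r * ((monom aa 2)^j - [:-bb:]^j)" by (simp add: algebra_simps)
  moreover have "[:bb,0,aa:] dvd ((monom aa 2)^j - [:-bb:]^j)"
    unfolding G_monom by (rule dvd_power_diff)
  ultimately show ?thesis by simp
qed

lemma sum_even_odd: "(\<Sum>k\<le>2*m. g k) = (\<Sum>j\<le>m. g (2*j)) + (\<Sum>j<m. g (2*j+1))"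
  for g :: "nat \<Rightarrow> 'a :: comm_monoid_add"
proof (induction m)
  case 0 show ?case by simp
next
  case (Suc m)
  have "(\<Sum>k\<le>2*Suc m. g k) = (\<Sum>k\<le>2*m. g k) + g (2*m+1) + g (2*m+2)"
    by (simp add: sum.atMost_Suc)
  then show ?case using Suc by (simp add: sum.atMost_Suc sum.lessThan_Suc algebra_simps)
qed

lemma lift_coeff: "coeff (lift_coeffs P) k = Cp P k"
  by (simp add: lift_coeffs_def Cp_def)
lemma lift_degree: "degree (lift_coeffs P) = degree P"
  unfolding lift_coeffs_def by simp

lemma res_formula:
  assumes dP: "degree P = 2*m" and m: "m \<ge> 1"
  shows "resultant (lift_coeffs P) f_step = (Ehat P m)^2 + aa*bb*(Ohat P m)^2"
proof -
  let ?G = "[:bb,0,aa:]"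
  define F0 where "F0 = lift_coeffs P"
  define F where "F = smult (aa^m) F0"
  define E where "E = Ehat P m"
  define Od where "Od = Ohat P m"
  define H where "H = [:E, aa*Od:]"
  have dF0: "degree F0 = 2*m" using dP by (simp add: F0_def lift_degree)
  have dF: "degree F = 2*m" using dF0 aa_nz by (simp add: F_def)
  have dG: "degree ?G = 2" using aa_nz by simp
  have lcG: "coeff ?G 2 = aa" by (simp add: numeral_2_eq_2)
  have F_sum: "F = (\<Sum>k\<le>2*m. monom (aa^m * Cp P k) k)"
  proof -
    have "F0 = (\<Sum>k\<le>2*m. monom (Cp P k) k)"
      using poly_as_sum_of_monoms[of F0] dF0 by (simp add: F0_def lift_coeff)
    then show ?thesis by (simp add: F_def smult_sum2 smult_monom)
  qed
  have E_sum: "E = (\<Sum>j\<le>m. Cp P (2*j) * (-bb)^j * aa^(m-j))"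
    by (simp add: E_def Ehat_def sum.lessThan_Suc flip: lessThan_Suc_atMost)
  have O_sum: "aa*Od = (\<Sum>j<m. Cp P (2*j+1) * (-bb)^j * aa^(m-j))"
  proof -
    have "aa*Od = (\<Sum>j<m. aa * (Cp P (2*j+1) * (-bb)^j * aa^(m-1-j)))"
      by (simp add: Od_def Ohat_def sum_distrib_left)
    also have "\<dots> = (\<Sum>j<m. Cp P (2*j+1) * (-bb)^j * aa^(m-j))"
    proof (rule sum.cong)
      fix j assume "j \<in> {..<m}"
      then have "m - j = Suc (m-1-j)" by auto
      then show "aa * (Cp P (2*j+1) * (-bb)^j * aa^(m-1-j)) = Cp P (2*j+1) * (-bb)^j * aa^(m-j)"
        by (simp add: algebra_simps)
    qed simp
    finally show ?thesis .
  qed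
  have H_sum: "H = (\<Sum>j\<le>m. monom (Cp P (2*j) * (-bb)^j * aa^(m-j)) (2*0))
                 + (\<Sum>j<m. monom (Cp P (2*j+1) * (-bb)^j * aa^(m-j)) 1)"
  proof -
    have "H = monom E 0 + monom (aa*Od) 1" by (simp add: H_def monom_altdef)
    then show ?thesis by (simp add: E_sum O_sum monom_sum)
  qed
  have F_split: "F = (\<Sum>j\<le>m. monom (aa^m * Cp P (2*j)) (2*j + 0))
                 + (\<Sum>j<m. monom (aa^m * Cp P (2*j+1)) (2*j+1))"
    unfolding F_sum by (subst sum_even_odd) simp
  have "?G dvd (F - H)"
  proof -
    have "F - H = (\<Sum>j\<le>m. monom (aa^m * Cp P (2*j)) (2*j + 0) - monom (Cp P (2*j) * (-bb)^j * aa^(m-j)) 0)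
        + (\<Sum>j<m. monom (aa^m * Cp P (2*j+1)) (2*j+1) - monom (Cp P (2*j+1) * (-bb)^j * aa^(m-j)) 1)"
      unfolding F_split H_sum by (simp add: sum_subtractf algebra_simps)
    moreover have "?G dvd (\<Sum>j\<le>m. monom (aa^m * Cp P (2*j)) (2*j + 0) - monom (Cp P (2*j) * (-bb)^j * aa^(m-j)) 0)"
      by (rule dvd_sum) (rule cong_term, simp)
    moreover have "?G dvd (\<Sum>j<m. monom (aa^m * Cp P (2*j+1)) (2*j+1) - monom (Cp P (2*j+1) * (-bb)^j * aa^(m-j)) 1)"
      by (rule dvd_sum) (rule cong_term, simp)
    ultimately show ?thesis by simp
  qed
  then obtain B0 where B0: "F - H = ?G * B0" by (elim dvdE)
  have FGH: "F + (-B0) * ?G = H" using B0 by (simp add: algebra_simps)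
  have resF: "resultant F ?G = aa^(2*m) * resultant F0 ?G"
    using resultant_smult_left[of "aa^m" F0 ?G] aa_nz dG by (simp add: F_def mult_2 power_add)
  have "resultant F0 ?G = E^2 + aa*bb*Od^2"
  proof (cases "Od = 0")
    case True
    then have H: "H = [:E:]" by (simp add: H_def)
    have dH: "degree H = 0" using H by simp
    have "subresultant (degree H) F ?G = smult ((-1)^((degree F - degree H) * (degree ?G - degree H)) *
       lead_coeff ?G ^ (degree F - degree H) * lead_coeff H ^ (degree ?G - degree H - 1)) H"
      by (rule BT_lemma_1_13[OF FGH]) (use dF dG dH m in auto)
    then have "subresultant 0 F ?G = smult (aa^(2*m) * E) [:E:]"
      using dF dG dH H lcG by (simp add: power_mult_distrib)
    then have "resultant F ?G = aa^(2*m) * E^2" unfolding subresultant_resultant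
      by (simp add: power2_eq_square)
    then show ?thesis using resF aa_nz True by simp
  next
    case False
    then have dH: "degree H = 1" using aa_nz by (simp add: H_def)
    have "subresultant 0 F ?G = smult ((-1)^((degree F - 0) * (degree ?G - 0)) *
       lead_coeff ?G ^ (degree F - degree H)) (subresultant 0 ?G H)"
      by (rule BT_lemma_1_12[OF FGH]) (use dF dG dH m in auto)
    then have "resultant F ?G = aa^(2*m-1) * resultant ?G H"
      using dF dG dH lcG by (simp add: subresultant_resultant)
    also have "resultant ?G H = aa*E^2 + bb*(aa*Od)^2"
      unfolding H_def by (rule res_quad_lin) (use aa_nz False in auto)
    finally have "aa^(2*m) * resultant F0 ?G = aa^(2*m-1) * (aa*(E^2 + aa*bb*Od^2))"
      using resF by (simp add: algebra_simps power2_eq_square)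
    also have "\<dots> = aa^(2*m) * (E^2 + aa*bb*Od^2)"
      using m by (simp add: power_eq_if[of aa "2*m"])
    finally show ?thesis using aa_nz by simp
  qed
  then show ?thesis by (simp add: F0_def f_step_eq E_def Od_def)
qed

lemma coeff3: "coeff [:a,b,c:] i = (if i = 0 then a else if i = 1 then b else if i = 2 then c else 0)"
  by (cases i; cases "i - 1"; simp add: numeral_2_eq_2 coeff_pCons split: nat.split)
lemma coeff2: "coeff [:a,b:] i = (if i = 0 then a else if i = 1 then b else 0)"
  by (cases i; simp add: coeff_pCons split: nat.split)

lemma coeff_aa: "coeff aa j = (if j \<le> 1 then 1 else 0)"
  unfolding aa_def by (cases j) auto
lemma coeff_bb: "coeff bb j = (if j = 1 then -1 else if j = 2 then 1 else 0)"
  unfolding bb_def by (cases j; cases "j - 1") (auto simp: numeral_2_eq_2)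
lemma cf_aa: "cf aa i j = (if i = 0 \<and> j \<le> 1 then 1 else 0)"
  by (auto simp: cf_def coeff_aa)
lemma cf_bb: "cf bb i j = (if i = 0 \<and> j = 1 then -1 else if i = 0 \<and> j = 2 then 1 else 0)"
  by (auto simp: cf_def coeff_bb)
lemma cf_Cp: "cf (Cp P k) i j = (if j = 0 then cf P i k else 0)"
  by (simp add: cf_def Cp_def coeff_pCons split: nat.split)
lemma cf_1: "cf 1 i j = (if i = 0 \<and> j = 0 then 1 else 0)"
  by (simp add: cf_def coeff_1)

lemma wtop_aa: "wtop 1 1 1 0 1 1 aa"
  unfolding wtop_def wb_def cf_aa by auto
lemma wb_aa: "wb 1 0 0 aa"
  unfolding wb_def cf_aa by auto
lemma wtop_nbb: "wtop 1 1 2 0 2 (-1) (-bb)"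
  unfolding wtop_def wb_def cf_uminus cf_bb by auto
lemma wtop_bb: "wtop 1 1 2 0 2 1 bb"
  unfolding wtop_def wb_def cf_bb by auto
lemma wb_nbb: "wb 1 0 0 (-bb)"
  unfolding wb_def cf_uminus cf_bb by auto
lemma wb_bb: "wb 1 0 0 bb"
  unfolding wb_def cf_bb by auto

lemma wb_aa_pow: "wb 1 1 k (aa^k)"
  using wb_power[OF wtop_wb[OF wtop_aa], of k] by simp
lemma wb_nbb_pow: "wb 1 1 (2*k) ((-bb)^k)"
  using wb_power[OF wtop_wb[OF wtop_nbb], of k] by (simp add: mult.commute)
lemma wb10_aa_pow: "wb 1 0 0 (aa^k)"
  using wb_power[OF wb_aa, of k] by simp
lemma wb10_nbb_pow: "wb 1 0 0 ((-bb)^k)"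
  using wb_power[OF wb_nbb, of k] by simp

lemma wb_Cp10: "wb 1 0 X P \<Longrightarrow> wb 1 0 X (Cp P k)"
  unfolding wb_def cf_Cp by auto
lemma wb_Cp11: "(\<And>i. cf P i k \<noteq> 0 \<Longrightarrow> i \<le> X) \<Longrightarrow> wb 1 1 X (Cp P k)"
  unfolding wb_def cf_Cp by auto

lemma wtop_cong: "wtop \<alpha> \<beta> M u1 u2 c Q \<Longrightarrow> M = M' \<Longrightarrow> u1 = u1' \<Longrightarrow> u2 = u2' \<Longrightarrow> c = c' \<Longrightarrow> wtop \<alpha> \<beta> M' u1' u2' c' Q"
  by simp

lemma step_lemma:
  assumes dP: "degree P = 2*m" and m: "m \<ge> 1"
    and w10: "wb 1 0 (2*m) P"
    and wt: "wtop 1 1 (4*m-1) (2*m) (2*m-1) c P" and c: "c \<noteq> 0"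
  shows "degree (resultant (lift_coeffs P) f_step) = 4*m"
    and "wb 1 0 (4*m) (resultant (lift_coeffs P) f_step)"
    and "wtop 1 1 (8*m-1) (4*m) (4*m-1) (c^2) (resultant (lift_coeffs P) f_step)"
proof -
  obtain m' where m': "m = Suc m'" using m by (cases m) auto
  define E where "E = Ehat P m"
  define Od where "Od = Ohat P m"
  have res: "resultant (lift_coeffs P) f_step = E^2 + aa*bb*Od^2"
    unfolding E_def Od_def by (rule res_formula[OF dP m])
  have w11: "wb 1 1 (4*m-1) P" using wt by (rule wtop_wb)
  have E10: "wb 1 0 (2*m) E"
    unfolding E_def Ehat_def
    by (intro wb_add wb_sum) (use wb_mult[OF wb_mult[OF wb_Cp10[OF w10] wb10_nbb_pow] wb10_aa_pow] wb_mult[OF wb_Cp10[OF w10] wb10_nbb_pow] in simp_all)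
  have O10: "wb 1 0 (2*m) Od"
    unfolding Od_def Ohat_def
    by (intro wb_add wb_sum) (use wb_mult[OF wb_mult[OF wb_Cp10[OF w10] wb10_nbb_pow] wb10_aa_pow] in simp_all)
  have abb10: "wb 1 0 0 (aa*bb)" using wb_mult[OF wb_aa wb_bb] by simp
  show "wb 1 0 (4*m) (resultant (lift_coeffs P) f_step)"
  proof -
    have "wb 1 0 (2*(2*m)) (E^2)" by (rule wb_power[OF E10])
    moreover have "wb 1 0 (0 + 2*(2*m)) (aa*bb*Od^2)" by (rule wb_mult[OF abb10 wb_power[OF O10]])
    ultimately show ?thesis unfolding res by (intro wb_add) simp_all
  qed
  have E11: "wb 1 1 (4*m-1) E"
  proof -
    have "wb 1 1 (4*m-1) (Cp P (2*j) * (-bb)^j * aa^(m-j))" if "j < m" for j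
    proof -
      have "wb 1 1 (2*m) (Cp P (2*j))" by (rule wb_Cp11) (use wbD[OF w10] in auto)
      from wb_mult[OF wb_mult[OF this wb_nbb_pow[of j]] wb_aa_pow[of "m-j"]]
      show ?thesis by (rule wb_mono) (use that in auto)
    qed
    moreover have "wb 1 1 (4*m-1) (Cp P (2*m) * (-bb)^m)"
    proof -
      have "wb 1 1 (2*m-1) (Cp P (2*m))" by (rule wb_Cp11) (use wbD[OF w11] in force)
      from wb_mult[OF this wb_nbb_pow[of m]]
      show ?thesis by (rule wb_mono) (use m in auto)
    qed
    ultimately show ?thesis unfolding E_def Ehat_def by (intro wb_add wb_sum) auto
  qed
  have Otop: "wtop 1 1 (4*m-2) (2*m) (2*m-2) (c*(-1)^m') Od"
  proof -
    have Od_eq: "Od = (\<Sum>j<m'. Cp P (2*j+1) * (-bb)^j * aa^(m-1-j)) + Cp P (2*m-1) * (-bb)^m' * aa^0"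
      unfolding Od_def Ohat_def m' by (simp add: sum.lessThan_Suc)
    have low: "wb 1 1 (4*m-3) (\<Sum>j<m'. Cp P (2*j+1) * (-bb)^j * aa^(m-1-j))"
    proof (intro wb_sum)
      fix j assume "j \<in> {..<m'}"
      then have j: "j < m'" by simp
      have "wb 1 1 (2*m) (Cp P (2*j+1))" by (rule wb_Cp11) (use wbD[OF w10] in auto)
      from wb_mult[OF wb_mult[OF this wb_nbb_pow[of j]] wb_aa_pow[of "m-1-j"]]
      show "wb 1 1 (4*m-3) (Cp P (2*j+1) * (-bb)^j * aa^(m-1-j))" by (rule wb_mono) (use j m' in auto)
    qed
    have cp: "wtop 1 1 (2*m) (2*m) 0 c (Cp P (2*m-1))"
      unfolding wtop_def
    proof (intro conjI allI impI)
      show "wb 1 1 (2*m) (Cp P (2*m-1))" by (rule wb_Cp11) (use wbD[OF w10] in auto)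
      show "cf (Cp P (2*m-1)) (2*m) 0 = c" using wt by (simp add: cf_Cp wtop_def)
    qed (auto simp: cf_Cp split: if_splits)
    have nbp: "wtop 1 1 (2*m') 0 (2*m') ((-1)^m') ((-bb)^m')"
      using wtop_power[OF wtop_nbb, of m'] by (simp add: mult.commute)
    have t: "wtop 1 1 (2*m + 2*m' + 0*1) (2*m + 0 + 0*0) (0 + 2*m' + 0*1) (c * (-1)^m' * 1^0) (Cp P (2*m-1) * (-bb)^m' * aa^0)"
      by (rule wtop_mult[OF wtop_mult[OF cp nbp] wtop_power[OF wtop_aa, of 0]])
    have t': "wtop 1 1 (4*m-2) (2*m) (2*m-2) (c*(-1)^m') (Cp P (2*m-1) * (-bb)^m' * aa^0)"
      using t m' by simp
    show ?thesis unfolding Od_eq by (rule wtop_add2[OF t' low]) (use m' in simp)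
  qed
  have abb: "wtop 1 1 3 0 3 1 (aa*bb)" using wtop_mult[OF wtop_aa wtop_bb] by (simp add: numeral_3_eq_3)
  have t2: "wtop 1 1 (3 + 2*(4*m-2)) (0 + 2*(2*m)) (3 + 2*(2*m-2)) (1 * (c*(-1)^m')^2) (aa*bb*Od^2)"
    by (rule wtop_mult[OF abb wtop_power[OF Otop]])
  have t2': "wtop 1 1 (8*m-1) (4*m) (4*m-1) (c^2) (aa*bb*Od^2)"
    by (rule wtop_cong[OF t2]) (use m' in \<open>simp_all add: power_mult_distrib flip: power_mult\<close>)
  have E2: "wb 1 1 (2*(4*m-1)) (E^2)" by (rule wb_power[OF E11])
  show "wtop 1 1 (8*m-1) (4*m) (4*m-1) (c^2) (resultant (lift_coeffs P) f_step)"
    unfolding res by (rule wtop_add2[OF t2' E2]) (use m in simp)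
  have P0: "coeff P (2*m) \<noteq> 0" using dP m by (metis leading_coeff_0_iff not_one_le_zero mult_is_0 degree_0 zero_neq_numeral)
  have dnbb: "degree (-bb) = 2" by (simp add: bb_def)
  have daa: "degree aa = 1" by (simp add: aa_def)
  have dbb: "degree bb = 2" by (simp add: bb_def)
  have dCp: "degree (Cp P k) = 0" for k by (simp add: Cp_def)
  have dE: "degree E = 2*m"
  proof -
    have top: "degree (Cp P (2*m) * (-bb)^m) = 2*m"
      using P0 by (simp add: degree_mult_eq degree_power_eq dCp dnbb Cp_def bb_def)
    have "degree (\<Sum>j<m. Cp P (2*j) * (-bb)^j * aa^(m-j)) < 2*m"
    proof -
      have "degree (\<Sum>j<m. Cp P (2*j) * (-bb)^j * aa^(m-j)) \<le> 2*m - 1"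
      proof (rule degree_sum_le)
        fix j assume "j \<in> {..<m}"
        then have j: "j < m" by simp
        have "degree (Cp P (2*j) * (-bb)^j * aa^(m-j)) \<le> degree (Cp P (2*j)) + degree ((-bb)^j) + degree (aa^(m-j))"
          by (meson add_le_mono degree_mult_le le_refl order_trans)
        also have "\<dots> \<le> 0 + 2*j + (m-j)"
          using degree_power_le[of "-bb" j] degree_power_le[of aa "m-j"] dnbb daa dCp by (intro add_mono) auto
        finally show "degree (Cp P (2*j) * (-bb)^j * aa^(m-j)) \<le> 2*m - 1" using j by linarith
      qed simp
      then show ?thesis using m by linarith
    qed
    then show ?thesis unfolding E_def Ehat_def using top by (simp add: degree_add_eq_right)
  qed
  have dO: "degree Od \<le> 2*m - 2"
    unfolding Od_def Ohat_def
  proof (rule degree_sum_le)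
    fix j assume "j \<in> {..<m}"
    then have j: "j < m" by simp
    have "degree (Cp P (2*j+1) * (-bb)^j * aa^(m-1-j)) \<le> degree (Cp P (2*j+1)) + degree ((-bb)^j) + degree (aa^(m-1-j))"
      by (meson add_le_mono degree_mult_le le_refl order_trans)
    also have "\<dots> \<le> 0 + 2*j + (m-1-j)"
      using degree_power_le[of "-bb" j] degree_power_le[of aa "m-1-j"] dnbb daa dCp by (intro add_mono) auto
    finally show "degree (Cp P (2*j+1) * (-bb)^j * aa^(m-1-j)) \<le> 2*m - 2" using j by linarith
  qed simp
  have "degree (aa*bb*Od^2) \<le> 4*m - 1"
  proof -
    have "degree (aa*bb*Od^2) \<le> degree aa + degree bb + degree (Od^2)"
      by (meson add_le_mono degree_mult_le le_refl order_trans)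
    also have "\<dots> \<le> 1 + 2 + 2*(2*m-2)"
      using degree_power_le[of Od 2] dO daa dbb by (intro add_mono) auto
    finally show ?thesis using m by linarith
  qed
  moreover have "degree (E^2) = 4*m"
  proof -
    have "E \<noteq> 0" using dE m by auto
    then show ?thesis using dE by (simp add: degree_power_eq)
  qed
  ultimately have lt: "degree (aa*bb*Od^2) < degree (E^2)" and d4: "degree (E^2) = 4*m"
    using m by linarith+
  show "degree (resultant (lift_coeffs P) f_step) = 4*m"
    unfolding res using degree_add_eq_left[OF lt] d4 by simp
qed

lemma cf_R1: "cf R1 i j = (if (i = 2 \<and> j = 0) \<or> (i = 2 \<and> j = 1) \<or> (i = 0 \<and> j = 2) then 1
   else if i = 0 \<and> j = 1 then -1 else 0)"
  unfolding cf_def R1_def coeff3 by (auto simp: coeff_1 numeral_2_eq_2 coeff_pCons split: nat.split)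

lemma R1_inv: "degree R1 = 2" "wb 1 0 2 R1" "wtop 1 1 3 2 1 1 R1"
proof -
  show "degree R1 = 2" by (simp add: R1_def)
  show "wb 1 0 2 R1" unfolding wb_def cf_R1 by auto
  show "wtop 1 1 3 2 1 1 R1" unfolding wtop_def wb_def cf_R1 by auto
qed

lemma inv: "n \<ge> 1 \<Longrightarrow> degree (Rpoly n) = 2^n \<and> wb 1 0 (2^n) (Rpoly n) \<and>
   (\<exists>c. c \<noteq> 0 \<and> wtop 1 1 (2*2^n - 1) (2^n) (2^n - 1) c (Rpoly n))"
proof (induction n rule: dec_induct)
  case base
  have "wtop 1 1 (2*2^1-1) (2^1) (2^1-1) 1 R1" using R1_inv(3) by simp
  then have "\<exists>c. c \<noteq> 0 \<and> wtop 1 1 (2*2^1-1) (2^1) (2^1-1) c R1" by (intro exI[of _ "1::int"]) simp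
  then show ?case using R1_inv(1,2) by simp
next
  case (step n)
  obtain k where k: "n = Suc k" using step.hyps by (cases n) auto
  define m where "m = (2::nat)^k"
  have m1: "m \<ge> 1" by (simp add: m_def)
  have d: "2^n = 2*m" by (simp add: m_def k)
  from step.IH obtain c where c: "c \<noteq> 0" and wt: "wtop 1 1 (2*2^n - 1) (2^n) (2^n - 1) c (Rpoly n)"
    and dP: "degree (Rpoly n) = 2^n" and w10: "wb 1 0 (2^n) (Rpoly n)" by blast
  have R: "Rpoly (Suc n) = resultant (lift_coeffs (Rpoly n)) f_step" by (simp add: k)
  have wt': "wtop 1 1 (4*m - 1) (2*m) (2*m - 1) c (Rpoly n)" using wt d by simp
  note s = step_lemma[OF dP[unfolded d] m1 w10[unfolded d] wt' c]
  have d2: "2^Suc n = 4*m" using d by simp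
  show ?case unfolding R d2
    using s c by (intro conjI exI[of _ "c^2"]) (simp_all add: algebra_simps)
qed

lemma coeff_Rdiag: "coeff (poly Q [:0,1:]) s = (\<Sum>k\<le>degree Q. if k \<le> s then cf Q (s-k) k else 0)"
  unfolding cf_def
proof -
  have "poly Q [:0,1:] = (\<Sum>k\<le>degree Q. monom 1 k * coeff Q k)"
    by (simp add: poly_altdef x_pow_n[symmetric] monom_altdef mult.commute)
  then have "coeff (poly Q [:0,1:]) s = (\<Sum>k\<le>degree Q. coeff (monom 1 k * coeff Q k) s)"
    by (simp add: coeff_sum)
  also have "\<dots> = (\<Sum>k\<le>degree Q. if k \<le> s then coeff (coeff Q k) (s-k) else 0)"
    by (rule sum.cong) (simp_all add: coeff_monom_mult)
  finally show "coeff (poly Q [:0,1:]) s = (\<Sum>k\<le>degree Q. if k \<le> s then coeff (coeff Q k) (s-k) else 0)" .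
qed

theorem mainTheorem19:
  fixes n :: nat
  assumes "n \<ge> 1"
  shows "degree (Rdiag n) = 2 ^ (n + 1) - 1"
proof -
  define d where "d = (2::nat)^n"
  define Q where "Q = Rpoly n"
  from inv[OF assms] obtain c where c: "c \<noteq> 0" and wt: "wtop 1 1 (2*d - 1) d (d - 1) c Q"
    and dQ: "degree Q = d" by (auto simp: d_def Q_def)
  have d1: "d \<ge> 1" by (simp add: d_def)
  have wb11: "wb 1 1 (2*d-1) Q" using wt by (rule wtop_wb)
  have hi: "coeff (Rdiag n) s = 0" if "s > 2*d - 1" for s
    unfolding Rdiag_def Q_def[symmetric] coeff_Rdiag
  proof (rule sum.neutral, intro ballI)
    fix k assume "k \<in> {..degree Q}"
    show "(if k \<le> s then cf Q (s-k) k else 0) = 0"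
    proof (cases "k \<le> s")
      case True
      have "cf Q (s-k) k = 0"
      proof (rule ccontr)
        assume "cf Q (s-k) k \<noteq> 0"
        then have "1*(s-k) + 1*k \<le> 2*d-1" by (rule wbD[OF wb11])
        with True that show False by linarith
      qed
      then show ?thesis by simp
    qed simp
  qed
  have top: "coeff (Rdiag n) (2*d-1) = c"
    unfolding Rdiag_def Q_def[symmetric] coeff_Rdiag
  proof -
    have "(\<Sum>k\<le>degree Q. if k \<le> 2*d-1 then cf Q (2*d-1-k) k else 0) =
          (if d - 1 \<le> 2*d-1 then cf Q (2*d-1-(d-1)) (d-1) else 0)"
    proof (rule sum_single)
      show "d - 1 \<in> {..degree Q}" using dQ by simp
      fix k assume "k \<in> {..degree Q}" "k \<noteq> d - 1"
      then show "(if k \<le> 2*d-1 then cf Q (2*d-1-k) k else 0) = 0"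
      proof (cases "k \<le> 2*d-1")
        case True
        have "cf Q (2*d-1-k) k = 0"
        proof (rule ccontr)
          assume h: "cf Q (2*d-1-k) k \<noteq> 0"
          have "1*(2*d-1-k) + 1*k = 2*d-1" using True by simp
          with h wt have "k = d-1" unfolding wtop_def by blast
          with \<open>k \<noteq> d - 1\<close> show False by simp
        qed
        then show ?thesis by simp
      qed simp
    qed simp
    also have "\<dots> = c" using wt d1 unfolding wtop_def by (simp add: algebra_simps)
    finally show "(\<Sum>k\<le>degree Q. if k \<le> 2*d-1 then cf Q (2*d-1-k) k else 0) = c" .
  qed
  have "degree (Rdiag n) = 2*d - 1"
  proof (rule antisym)
    show "degree (Rdiag n) \<le> 2*d - 1" using hi by (meson degree_le not_le_imp_less)
    show "2*d - 1 \<le> degree (Rdiag n)" using top c by (simp add: le_degree)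
  qed
  then show ?thesis by (simp add: d_def)
qed

end
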